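(* Consider, for each $n$, the model and algorithm described in the context, with constants $\alpha\in[0,1/2)$, $c>0$, $p\in[0,1/2)$, erasure probability $\epsilon=1-c/n^{\alpha}$, $r\to\infty$, and $k\le n^{\alpha-\gamma}$ for a constant $\gamma>0$. Run $\texttt{local\_algo}(k)$ and let $\mathbf Y_k$ denote $\mathbf Y$ restricted to the $k$ rows selected in Step 1. Then with probability tending to 1 as $n\to\infty$, $$\max_{j}|\mathbf Y_k(:,j)|\le \lfloor 1/\gamma\rfloor,$$ where the maximum is over all columns $j$.
   Context: Model: $\mathbf X$ is an $n\times n$ binary matrix. Let $\{A_i\}_{i=1}^r$ be a partition of the row indices and $\{B_i\}_{i=1}^r$ a partition of the column indices, with $|A_i|=|B_i|=k$ for all $i$ (so $n=rk$). Let $\xi_{ij}$ be i.i.d. Bernoulli$(1/2)$ and set $\mathbf X(a,b)=\xi_{ij}$ for $(a,b)\in A_i\times B_j$. The observed matrix $\mathbf Y$ (entries in $\{0,1,*\}$) is obtained by passing each entry of $\mathbf X$ independently through a binary symmetric channel with crossover probability $p$, then independently erasing each entry (replacing it by $*$) with probability $\epsilon$. Row 1 belongs to $A_1$. Similarity: $s_{ij}=\sum_{l=1}^n \mathbf 1\{\mathbf Y(i,l)\ne *\}\mathbf 1\{\mathbf Y(j,l)\ne *\}\mathbf 1\{\mathbf Y(i,l)=\mathbf Y(j,l)\}$. Algorithm $\texttt{local\_algo}(T)$: Step 1 selects the $T$ rows with highest $s_{1i}$, $i=1,\dots,n$; Step 2 selects, among columns $j$ with $\mathbf Y(1,j)=*$,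 a column with the maximum number of 1's within the selected rows. For $\bar y\in\{0,1,*\}^k$, $|\bar y|$ denotes the number of non-erased entries (0's and 1's) of $\bar y$; $\mathbf Y_k(:,j)$ is the $j$-th column of $\mathbf Y_k$. *)

theory Defs
  imports "HOL-Probability.Probability"
begin

text \<open>Observed matrices: entries Some True = 1, Some False = 0, None = erased.
  Row/column indices are 0..n-1; row 0 is the paper's row 1.\<close>
type_synonym obsmat = "nat \<times> nat \<Rightarrow> bool option"

text \<open>The observation map: block-constant matrix X(a,b) = xi(blkA a, blkB b),
  passed through a BSC (flip) and then an erasure channel (er).\<close>
definition observe ::
  "nat \<Rightarrow> (nat \<Rightarrow> nat) \<Rightarrow> (nat \<Rightarrow> nat) \<Rightarrow>
   (nat \<times> nat \<Rightarrow> bool) \<times> (nat \<times> nat \<Rightarrow> bool) \<times> (nat \<times> nat \<Rightarrow> bool) \<Rightarrow> obsmat" where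
  "observe n blkA blkB w = (case w of (xi, fl, er) \<Rightarrow>
     (\<lambda>(a, b). if a < n \<and> b < n then
                  (if er (a, b) then None else Some (xi (blkA a, blkB b) \<noteq> fl (a, b)))
                else None))"

definition Ypmf ::
  "nat \<Rightarrow> nat \<Rightarrow> (nat \<Rightarrow> nat) \<Rightarrow> (nat \<Rightarrow> nat) \<Rightarrow> real \<Rightarrow> real \<Rightarrow> obsmat pmf" where
  "Ypmf n r blkA blkB p eps =
     map_pmf (observe n blkA blkB)
       (pair_pmf (Pi_pmf ({..<r} \<times> {..<r}) False (\<lambda>_. bernoulli_pmf (1/2)))
         (pair_pmf (Pi_pmf ({..<n} \<times> {..<n}) False (\<lambda>_. bernoulli_pmf p))
                   (Pi_pmf ({..<n} \<times> {..<n}) False (\<lambda>_. bernoulli_pmf eps))))"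

definition sim :: "nat \<Rightarrow> obsmat \<Rightarrow> nat \<Rightarrow> nat \<Rightarrow> nat" where
  "sim n Y i j = card {l \<in> {..<n}. Y (i, l) \<noteq> None \<and> Y (j, l) \<noteq> None \<and> Y (i, l) = Y (j, l)}"

text \<open>S is a valid outcome of Step 1 of local_algo(T): T rows with highest s_{1i}
  (any tie-breaking).\<close>
definition step1_valid :: "nat \<Rightarrow> nat \<Rightarrow> obsmat \<Rightarrow> nat set \<Rightarrow> bool" where
  "step1_valid n T Y S \<longleftrightarrow> S \<subseteq> {..<n} \<and> card S = T \<and>
     (\<forall>i\<in>S. \<forall>j\<in>{..<n} - S. sim n Y 0 j \<le> sim n Y 0 i)"

definition block_partition :: "nat \<Rightarrow> nat \<Rightarrow> nat \<Rightarrow> (nat \<Rightarrow> nat) \<Rightarrow> bool" where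
  "block_partition n r k blk \<longleftrightarrow> (\<forall>a<n. blk a < r) \<and>
     (\<forall>i<r. card {a \<in> {..<n}. blk a = i} = k)"

definition col_count :: "obsmat \<Rightarrow> nat set \<Rightarrow> nat \<Rightarrow> nat" where
  "col_count Y S j = card {i \<in> S. Y (i, j) \<noteq> None}"

end

theory Submission
  imports Defs "HOL-Real_Asymp.Real_Asymp"
begin


lemma finite_set_Pi_pmf:
  fixes P :: "'a \<Rightarrow> 'b::finite pmf"
  assumes "finite I"
  shows "finite (set_pmf (Pi_pmf I d P))"
proof -
  have "set_pmf (Pi_pmf I d P) \<subseteq> PiE_dflt I d (\<lambda>_. UNIV)"
    using set_Pi_pmf_subset'[OF assms, of d P] unfolding PiE_dflt_def by auto
  moreover have "finite (PiE_dflt I d (\<lambda>_. (UNIV::'b set)))"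
    using assms by (intro finite_PiE_dflt) auto
  ultimately show ?thesis by (rule finite_subset)
qed

lemma finite_set_pair_pmf:
  "finite (set_pmf A) \<Longrightarrow> finite (set_pmf B) \<Longrightarrow> finite (set_pmf (pair_pmf A B))"
  by (simp add: set_pair_pmf)

lemma prob_as_expectation:
  "measure_pmf.prob M A = measure_pmf.expectation M (\<lambda>x. of_bool (x \<in> A))"
proof -
  have "(\<lambda>x. of_bool (x \<in> A) :: real) = indicator A" by (auto simp: indicator_def)
  then show ?thesis by (simp add: integral_indicator)
qed

lemma expectation_pair_iter:
  fixes f :: "_ \<Rightarrow> real"
  assumes "finite (set_pmf A)" "finite (set_pmf B)"
  shows "measure_pmf.expectation (pair_pmf A B) f =
         measure_pmf.expectation A (\<lambda>x. measure_pmf.expectation B (\<lambda>y. f (x, y)))"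
proof -
  have "measure_pmf.expectation (pair_pmf A B) f = (\<Sum>z\<in>set_pmf A \<times> set_pmf B. f z * pmf (pair_pmf A B) z)"
    using assms by (intro integral_measure_pmf_real) (auto simp: set_pair_pmf)
  also have "\<dots> = (\<Sum>x\<in>set_pmf A. \<Sum>y\<in>set_pmf B. f (x,y) * (pmf A x * pmf B y))"
    unfolding sum.cartesian_product by (auto intro!: sum.cong simp: pmf_pair)
  also have "\<dots> = (\<Sum>x\<in>set_pmf A. (\<Sum>y\<in>set_pmf B. f (x,y) * pmf B y) * pmf A x)"
    by (simp add: sum_distrib_right sum_distrib_left mult_ac)
  also have "\<dots> = measure_pmf.expectation A (\<lambda>x. measure_pmf.expectation B (\<lambda>y. f (x, y)))"
    using assms by (subst integral_measure_pmf_real[of "set_pmf A"]) (auto simp: integral_measure_pmf_real[of "set_pmf B"])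
  finally show ?thesis .
qed

lemma prob_pair_le:
  assumes "finite (set_pmf A)" "finite (set_pmf B)"
    and "\<And>x. x \<in> set_pmf A \<Longrightarrow> measure_pmf.prob B {y. (x, y) \<in> E} \<le> \<beta>"
  shows "measure_pmf.prob (pair_pmf A B) E \<le> \<beta>"
proof -
  have "measure_pmf.prob (pair_pmf A B) E =
        measure_pmf.expectation A (\<lambda>x. measure_pmf.prob B {y. (x, y) \<in> E})"
    by (simp add: prob_as_expectation expectation_pair_iter[OF assms(1,2)])
  also have "\<dots> \<le> measure_pmf.expectation A (\<lambda>x. \<beta>)"
    using assms by (intro integral_mono_AE) (auto intro!: integrable_measure_pmf_finite AE_pmfI)
  also have "\<dots> = \<beta>" by simp
  finally show ?thesis .
qed

lemma prob_pair_fst: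
  "measure_pmf.prob (pair_pmf A B) {z. P (fst z)} = measure_pmf.prob A {x. P x}"
proof -
  have "measure_pmf.prob A {x. P x} = measure_pmf.prob (map_pmf fst (pair_pmf A B)) {x. P x}"
    by (simp add: map_fst_pair_pmf)
  also have "\<dots> = measure_pmf.prob (pair_pmf A B) {z. P (fst z)}"
    by (simp add: measure_map_pmf vimage_def)
  finally show ?thesis by simp
qed

lemma markov_exp:
  fixes X :: "_ \<Rightarrow> real"
  assumes "finite (set_pmf M)" "t \<ge> 0"
  shows "measure_pmf.prob M {x. \<tau> \<le> X x} \<le> measure_pmf.expectation M (\<lambda>x. exp (t * X x)) / exp (t * \<tau>)"
proof -
  have "measure_pmf.prob M {x. \<tau> \<le> X x} = measure_pmf.expectation M (\<lambda>x. of_bool (\<tau> \<le> X x))"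
    by (simp add: prob_as_expectation)
  also have "\<dots> \<le> measure_pmf.expectation M (\<lambda>x. exp (t * X x) / exp (t * \<tau>))"
  proof (intro integral_mono_AE)
    show "AE x in measure_pmf M. of_bool (\<tau> \<le> X x) \<le> exp (t * X x) / exp (t * \<tau>)"
    proof (intro AE_pmfI)
      fix x
      have "0 \<le> exp (t * X x) / exp (t * \<tau>)" by simp
      moreover have "\<tau> \<le> X x \<Longrightarrow> 1 \<le> exp (t * X x) / exp (t * \<tau>)"
        using assms(2) by (simp add: mult_left_mono)
      ultimately show "of_bool (\<tau> \<le> X x) \<le> exp (t * X x) / exp (t * \<tau>)" by auto
    qed
  qed (use assms in \<open>auto intro!: integrable_measure_pmf_finite\<close>)
  also have "\<dots> = measure_pmf.expectation M (\<lambda>x. exp (t * X x)) / exp (t * \<tau>)"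
    by simp
  finally show ?thesis .
qed



lemma prod_reindex_aux:
  fixes h :: "'a \<Rightarrow> real"
  assumes "finite I" "inj_on u L" "u ` L \<subseteq> I" "\<And>x. x \<in> I - u ` L \<Longrightarrow> h x = 1"
  shows "(\<Prod>x\<in>I. h x) = (\<Prod>l\<in>L. h (u l))"
proof -
  have "(\<Prod>x\<in>I. h x) = (\<Prod>x\<in>u ` L. h x)"
    using assms by (intro prod.mono_neutral_right) auto
  also have "\<dots> = (\<Prod>l\<in>L. h (u l))"
    using assms by (simp add: prod.reindex)
  finally show ?thesis .
qed

lemma expectation_prod_Pi_pmf_reindex:
  fixes g :: "'l \<Rightarrow> 'b::finite \<Rightarrow> real" and P :: "'a \<Rightarrow> 'b pmf"
  assumes "finite I" "inj_on u L" "u ` L \<subseteq> I" "\<And>l y. l \<in> L \<Longrightarrow> 0 \<le> g l y"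
  shows "measure_pmf.expectation (Pi_pmf I d P) (\<lambda>w. \<Prod>l\<in>L. g l (w (u l))) =
         (\<Prod>l\<in>L. measure_pmf.expectation (P (u l)) (g l))"
proof -
  define f where "f x y = (if x \<in> u ` L then g (the_inv_into L u x) y else 1)" for x y
  have fu: "f (u l) = g l" if "l \<in> L" for l
    using that assms(2) by (auto simp: f_def fun_eq_iff the_inv_into_f_f)
  have fo: "f x = (\<lambda>_. 1)" if "x \<notin> u ` L" for x
    using that by (auto simp: f_def fun_eq_iff)
  have 1: "(\<Prod>x\<in>I. f x (w x)) = (\<Prod>l\<in>L. g l (w (u l)))" for w
    using assms(1-3) by (subst prod_reindex_aux[where u = u and L = L]) (auto simp: f_def fu)
  have 2: "(\<Prod>x\<in>I. measure_pmf.expectation (P x) (f x)) =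
           (\<Prod>l\<in>L. measure_pmf.expectation (P (u l)) (g l))"
    using assms(1-3) by (subst prod_reindex_aux[where u = u and L = L]) (auto simp: fo fu)
  have "measure_pmf.expectation (Pi_pmf I d P) (\<lambda>w. \<Prod>x\<in>I. f x (w x)) =
        (\<Prod>x\<in>I. measure_pmf.expectation (P x) (\<lambda>v. f x v))"
  proof (rule expectation_prod_Pi_pmf)
    show "integrable (measure_pmf (P x)) (f x)" for x
      by (intro integrable_measure_pmf_finite) simp
    show "0 \<le> f x y" for x y
      using assms(4) by (auto simp: f_def intro!: assms(4) the_inv_into_into[OF assms(2)])
  qed (use assms in auto)
  then show ?thesis using 1 2 by simp
qed

lemma expectation_prod_Pi_pmf_pairs:
  fixes G :: "'l \<Rightarrow> 'b::finite \<Rightarrow> 'b \<Rightarrow> real" and P :: "'a \<Rightarrow> 'b pmf"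
  assumes "finite I" "inj_on u L" "inj_on v L" "u ` L \<subseteq> I" "v ` L \<subseteq> I" "u ` L \<inter> v ` L = {}"
    and "\<And>l x y. l \<in> L \<Longrightarrow> 0 \<le> G l x y"
  shows "measure_pmf.expectation (Pi_pmf I d P) (\<lambda>w. \<Prod>l\<in>L. G l (w (u l)) (w (v l))) =
         (\<Prod>l\<in>L. measure_pmf.expectation (P (u l)) (\<lambda>x. measure_pmf.expectation (P (v l)) (\<lambda>y. G l x y)))"
proof -
  define A where "A = u ` L"
  define B where "B = I - A"
  have fA: "finite A" "finite B" using assms(1,4) by (auto simp: A_def B_def intro: finite_subset)
  have IAB: "I = A \<union> B" using assms(4) by (auto simp: A_def B_def)
  have eq: "Pi_pmf I d P = map_pmf (\<lambda>(f,g) x. if x \<in> A then f x else g x) (pair_pmf (Pi_pmf A d P) (Pi_pmf B d P))"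
    unfolding IAB by (rule Pi_pmf_union) (use fA in \<open>auto simp: B_def\<close>)
  have "measure_pmf.expectation (Pi_pmf I d P) (\<lambda>w. \<Prod>l\<in>L. G l (w (u l)) (w (v l))) =
         measure_pmf.expectation (pair_pmf (Pi_pmf A d P) (Pi_pmf B d P))
           (\<lambda>z. \<Prod>l\<in>L. G l (fst z (u l)) (snd z (v l)))"
    unfolding eq integral_map_pmf
  proof (rule Bochner_Integration.integral_cong[OF refl])
    fix z :: "('a \<Rightarrow> 'b) \<times> ('a \<Rightarrow> 'b)"
    obtain f g where z: "z = (f, g)" by (cases z)
    have "G l (if u l \<in> A then f (u l) else g (u l)) (if v l \<in> A then f (v l) else g (v l)) =
          G l (f (u l)) (g (v l))" if "l \<in> L" for l
      using that assms(6) by (auto simp: A_def)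
    then show "(\<Prod>l\<in>L. G l ((case z of (f, g) \<Rightarrow> \<lambda>x. if x \<in> A then f x else g x) (u l))
                     ((case z of (f, g) \<Rightarrow> \<lambda>x. if x \<in> A then f x else g x) (v l))) =
          (\<Prod>l\<in>L. G l (fst z (u l)) (snd z (v l)))"
      by (simp add: z)
  qed
  also have "\<dots> = measure_pmf.expectation (Pi_pmf A d P)
      (\<lambda>f. measure_pmf.expectation (Pi_pmf B d P) (\<lambda>g. \<Prod>l\<in>L. G l (f (u l)) (g (v l))))"
    using fA by (simp add: expectation_pair_iter finite_set_Pi_pmf)
  also have "\<dots> = measure_pmf.expectation (Pi_pmf A d P)
      (\<lambda>f. \<Prod>l\<in>L. measure_pmf.expectation (P (v l)) (\<lambda>y. G l (f (u l)) y))"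
  proof (rule Bochner_Integration.integral_cong[OF refl])
    fix f :: "'a \<Rightarrow> 'b"
    show "measure_pmf.expectation (Pi_pmf B d P) (\<lambda>g. \<Prod>l\<in>L. G l (f (u l)) (g (v l))) =
          (\<Prod>l\<in>L. measure_pmf.expectation (P (v l)) (\<lambda>y. G l (f (u l)) y))"
      using fA assms by (intro expectation_prod_Pi_pmf_reindex[where g = "\<lambda>l y. G l (f (u l)) y"])
        (auto simp: A_def B_def)
  qed
  also have "\<dots> = (\<Prod>l\<in>L. measure_pmf.expectation (P (u l)) (\<lambda>x. measure_pmf.expectation (P (v l)) (\<lambda>y. G l x y)))"
    using fA assms
    by (intro expectation_prod_Pi_pmf_reindex[where g = "\<lambda>l x. measure_pmf.expectation (P (v l)) (\<lambda>y. G l x y)"])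
       (auto simp: A_def intro!: Bochner_Integration.integral_nonneg)
  finally show ?thesis .
qed

lemma pair_Pi_pmf:
  assumes "finite I"
  shows "pair_pmf (Pi_pmf I d1 P) (Pi_pmf I d2 Q) =
         map_pmf (\<lambda>w. (\<lambda>x. fst (w x), \<lambda>x. snd (w x))) (Pi_pmf I (d1, d2) (\<lambda>i. pair_pmf (P i) (Q i)))"
proof (rule pmf_eqI)
  fix z :: "('a \<Rightarrow> 'b) \<times> ('a \<Rightarrow> 'c)"
  obtain f g where z: "z = (f, g)" by (cases z)
  define h where "h = (\<lambda>w::'a \<Rightarrow> 'b \<times> 'c. (\<lambda>x. fst (w x), \<lambda>x. snd (w x)))"
  have inj: "inj h" unfolding h_def by (rule injI) (auto simp: fun_eq_iff prod_eq_iff)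
  have zh: "z = h (\<lambda>x. (f x, g x))" by (simp add: z h_def)
  have "pmf (map_pmf h (Pi_pmf I (d1, d2) (\<lambda>i. pair_pmf (P i) (Q i)))) z =
        pmf (Pi_pmf I (d1, d2) (\<lambda>i. pair_pmf (P i) (Q i))) (\<lambda>x. (f x, g x))"
    unfolding zh by (rule pmf_map_inj'[OF inj])
  also have "\<dots> = pmf (Pi_pmf I d1 P) f * pmf (Pi_pmf I d2 Q) g"
    using assms by (auto simp: pmf_Pi pmf_pair prod.distrib)
  finally show "pmf (pair_pmf (Pi_pmf I d1 P) (Pi_pmf I d2 Q)) z =
        pmf (map_pmf (\<lambda>w. (\<lambda>x. fst (w x), \<lambda>x. snd (w x))) (Pi_pmf I (d1, d2) (\<lambda>i. pair_pmf (P i) (Q i)))) z"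
    by (simp add: z pmf_pair h_def)
qed



lemma finite_set_pmf_finite_type: "finite (set_pmf (M :: 'a::finite pmf))"
  by (rule finite_subset[OF subset_UNIV]) simp

definition Qd :: "real \<Rightarrow> real \<Rightarrow> (bool \<times> bool) pmf" where
  "Qd p eps = pair_pmf (bernoulli_pmf p) (bernoulli_pmf eps)"

definition Wd :: "nat \<Rightarrow> real \<Rightarrow> real \<Rightarrow> (nat \<times> nat \<Rightarrow> bool \<times> bool) pmf" where
  "Wd n p eps = Pi_pmf ({..<n} \<times> {..<n}) (False, False) (\<lambda>_. Qd p eps)"

definition XId :: "nat \<Rightarrow> (nat \<times> nat \<Rightarrow> bool) pmf" where
  "XId r = Pi_pmf ({..<r} \<times> {..<r}) False (\<lambda>_. bernoulli_pmf (1/2))"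

definition Zf :: "bool \<Rightarrow> bool \<Rightarrow> bool \<times> bool \<Rightarrow> bool \<times> bool \<Rightarrow> bool" where
  "Zf x0 xb y0 yb \<longleftrightarrow> \<not> snd y0 \<and> \<not> snd yb \<and> ((x0 \<noteq> fst y0) = (xb \<noteq> fst yb))"

definition simw :: "nat \<Rightarrow> (nat \<Rightarrow> nat) \<Rightarrow> (nat \<Rightarrow> nat) \<Rightarrow> (nat \<times> nat \<Rightarrow> bool) \<Rightarrow> (nat \<times> nat \<Rightarrow> bool \<times> bool) \<Rightarrow> nat \<Rightarrow> nat" where
  "simw n blkA blkB \<xi> w b = card {l \<in> {..<n}. Zf (\<xi> (0, blkB l)) (\<xi> (blkA b, blkB l)) (w (0, l)) (w (b, l))}"

definition pif :: "real \<Rightarrow> real \<Rightarrow> (nat \<Rightarrow> nat) \<Rightarrow> (nat \<Rightarrow> nat) \<Rightarrow> (nat \<times> nat \<Rightarrow> bool) \<Rightarrow> nat \<Rightarrow> nat \<Rightarrow> real" where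
  "pif p eps blkA blkB \<xi> b l = (if b = 0 then 1 - eps else
     (1 - eps)^2 * (if \<xi> (0, blkB l) = \<xi> (blkA b, blkB l) then (1-p)^2 + p^2 else 2*p*(1-p)))"

lemma finite_Wd: "finite (set_pmf (Wd n p eps))"
  unfolding Wd_def by (rule finite_set_Pi_pmf) auto

lemma finite_XId: "finite (set_pmf (XId r))"
  unfolding XId_def by (rule finite_set_Pi_pmf) auto

lemma real_card_eq_sum: "finite L \<Longrightarrow> real (card {l \<in> L. P l}) = (\<Sum>l\<in>L. of_bool (P l))"
proof -
  assume "finite L"
  have "real (card {l \<in> L. P l}) = (\<Sum>l\<in>{l \<in> L. P l}. 1)" by simp
  also have "\<dots> = (\<Sum>l\<in>L. if P l then 1 else 0)" by (rule sum.inter_filter) fact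
  finally show ?thesis by (simp add: of_bool_def)
qed

lemma exp_card: assumes "finite L" shows "exp (t * real (card {l \<in> L. P l})) = (\<Prod>l\<in>L. exp (t * of_bool (P l)))"
  unfolding real_card_eq_sum[OF assms] sum_distrib_left exp_sum[OF assms] by (rule refl)

lemma EQ_pair:
  assumes "0 \<le> p" "p \<le> 1" "0 \<le> eps" "eps \<le> 1"
  shows "measure_pmf.expectation (Qd p eps) (\<lambda>y0. measure_pmf.expectation (Qd p eps)
            (\<lambda>yb. exp (t * of_bool (Zf x0 xb y0 yb)))) =
         1 + (exp t - 1) * ((1 - eps)^2 * (if x0 = xb then (1-p)^2 + p^2 else 2*p*(1-p)))"
  using assms
  by (cases x0; cases xb)
     (simp_all add: Qd_def expectation_pair_iter finite_set_pmf_finite_type integral_bernoulli_pmf Zf_def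
        power2_eq_square algebra_simps)

lemma EQ_single:
  assumes "0 \<le> p" "p \<le> 1" "0 \<le> eps" "eps \<le> 1"
  shows "measure_pmf.expectation (Qd p eps) (\<lambda>y. exp (t * of_bool (\<not> snd y))) = 1 + (exp t - 1) * (1 - eps)"
  using assms
  by (simp add: Qd_def expectation_pair_iter finite_set_pmf_finite_type integral_bernoulli_pmf algebra_simps)

lemma mgf_simw:
  assumes "0 \<le> p" "p \<le> 1" "0 \<le> eps" "eps \<le> 1" "b < n" "blkA 0 = 0"
  shows "measure_pmf.expectation (Wd n p eps) (\<lambda>w. exp (t * real (simw n blkA blkB \<xi> w b))) =
         (\<Prod>l<n. 1 + (exp t - 1) * pif p eps blkA blkB \<xi> b l)"
proof (cases "b = 0")
  case True
  have "exp (t * real (simw n blkA blkB \<xi> w b)) = (\<Prod>l<n. exp (t * of_bool (\<not> snd (w (0, l)))))" for w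
    using exp_card[of "{..<n}" t "\<lambda>l. \<not> snd (w (0, l))"] by (simp add: simw_def Zf_def True assms(6))
  hence "measure_pmf.expectation (Wd n p eps) (\<lambda>w. exp (t * real (simw n blkA blkB \<xi> w b))) =
         measure_pmf.expectation (Wd n p eps) (\<lambda>w. \<Prod>l<n. exp (t * of_bool (\<not> snd (w (0, l)))))"
    by simp
  also have "\<dots> = (\<Prod>l<n. measure_pmf.expectation (Qd p eps) (\<lambda>y. exp (t * of_bool (\<not> snd y))))"
    unfolding Wd_def
    by (rule expectation_prod_Pi_pmf_reindex[where u = "\<lambda>l. (0, l)" and g = "\<lambda>l y. exp (t * of_bool (\<not> snd y))"])
       (use assms in \<open>auto simp: inj_on_def\<close>)
  also have "\<dots> = (\<Prod>l<n. 1 + (exp t - 1) * pif p eps blkA blkB \<xi> b l)"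
    using assms by (simp add: EQ_single pif_def True)
  finally show ?thesis .
next
  case False
  have "exp (t * real (simw n blkA blkB \<xi> w b)) = (\<Prod>l<n.
           exp (t * of_bool (Zf (\<xi> (0, blkB l)) (\<xi> (blkA b, blkB l)) (w (0, l)) (w (b, l)))))" for w
    unfolding simw_def by (rule exp_card) simp
  hence "measure_pmf.expectation (Wd n p eps) (\<lambda>w. exp (t * real (simw n blkA blkB \<xi> w b))) =
        measure_pmf.expectation (Wd n p eps) (\<lambda>w. \<Prod>l<n.
           exp (t * of_bool (Zf (\<xi> (0, blkB l)) (\<xi> (blkA b, blkB l)) (w (0, l)) (w (b, l)))))"
    by simp
  also have "\<dots> = (\<Prod>l<n. measure_pmf.expectation (Qd p eps) (\<lambda>y0. measure_pmf.expectation (Qd p eps)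
            (\<lambda>yb. exp (t * of_bool (Zf (\<xi> (0, blkB l)) (\<xi> (blkA b, blkB l)) y0 yb)))))"
    unfolding Wd_def
    by (rule expectation_prod_Pi_pmf_pairs[where u = "\<lambda>l. (0, l)" and v = "\<lambda>l. (b, l)"
          and G = "\<lambda>l y0 yb. exp (t * of_bool (Zf (\<xi> (0, blkB l)) (\<xi> (blkA b, blkB l)) y0 yb))"])
       (use assms False in \<open>auto simp: inj_on_def\<close>)
  also have "\<dots> = (\<Prod>l<n. 1 + (exp t - 1) * pif p eps blkA blkB \<xi> b l)"
    using assms by (simp add: EQ_pair pif_def False)
  finally show ?thesis .
qed



lemma prod_le_exp_sum:
  fixes x :: "'a \<Rightarrow> real"
  assumes "\<And>l. l \<in> L \<Longrightarrow> 0 \<le> 1 + x l"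
  shows "(\<Prod>l\<in>L. 1 + x l) \<le> exp (\<Sum>l\<in>L. x l)"
proof (cases "finite L")
  case True
  have "(\<Prod>l\<in>L. 1 + x l) \<le> (\<Prod>l\<in>L. exp (x l))"
    using assms by (intro prod_mono) (auto simp: exp_ge_add_one_self add.commute)
  also have "\<dots> = exp (\<Sum>l\<in>L. x l)" by (simp add: exp_sum True)
  finally show ?thesis .
qed simp

lemma pif_bounds:
  assumes "0 \<le> p" "p \<le> 1" "0 \<le> eps" "eps \<le> 1"
  shows "0 \<le> pif p eps blkA blkB \<xi> b l" "pif p eps blkA blkB \<xi> b l \<le> 1"
proof -
  have pp: "0 \<le> p*(1-p)" using assms by simp
  have "(1-p)^2 + p^2 = 1 - 2*(p*(1-p))" by (simp add: power2_eq_square algebra_simps)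
  hence s: "(1-p)^2 + p^2 \<le> 1" using pp by linarith
  have sq: "0 \<le> (2*p-1)^2" by simp
  have "(2*p-1)^2 = 1 - 4*(p*(1-p))" by (simp add: power2_eq_square algebra_simps)
  hence t: "2*p*(1-p) \<le> 1" using sq pp by linarith
  have e: "(1 - eps)^2 \<le> 1" "0 \<le> (1-eps)^2" using assms by (auto simp: power_le_one)
  have t0: "0 \<le> 2*p*(1-p)" using assms by simp
  show "0 \<le> pif p eps blkA blkB \<xi> b l" using assms t0 by (auto simp: pif_def)
  show "pif p eps blkA blkB \<xi> b l \<le> 1"
    using assms s t e t0 by (auto simp: pif_def intro!: mult_le_one)
qed

lemma tail_upper_W:
  assumes "0 \<le> p" "p \<le> 1" "0 \<le> eps" "eps \<le> 1" "b < n" "blkA 0 = 0" "t \<ge> 0"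
  shows "measure_pmf.prob (Wd n p eps) {w. \<tau> \<le> real (simw n blkA blkB \<xi> w b)} \<le>
         exp ((exp t - 1) * (\<Sum>l<n. pif p eps blkA blkB \<xi> b l) - t * \<tau>)"
proof -
  have "measure_pmf.prob (Wd n p eps) {w. \<tau> \<le> real (simw n blkA blkB \<xi> w b)} \<le>
        measure_pmf.expectation (Wd n p eps) (\<lambda>w. exp (t * real (simw n blkA blkB \<xi> w b))) / exp (t * \<tau>)"
    by (rule markov_exp[OF finite_Wd assms(7)])
  also have "\<dots> = (\<Prod>l<n. 1 + (exp t - 1) * pif p eps blkA blkB \<xi> b l) / exp (t * \<tau>)"
    using assms by (simp add: mgf_simw)
  also have "\<dots> \<le> exp (\<Sum>l<n. (exp t - 1) * pif p eps blkA blkB \<xi> b l) / exp (t * \<tau>)"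
    using assms pif_bounds[OF assms(1-4)]
    by (intro divide_right_mono prod_le_exp_sum) (auto intro!: add_nonneg_nonneg mult_nonneg_nonneg)
  also have "\<dots> = exp ((exp t - 1) * (\<Sum>l<n. pif p eps blkA blkB \<xi> b l) - t * \<tau>)"
    by (simp add: sum_distrib_left exp_diff)
  finally show ?thesis .
qed

lemma tail_lower_W:
  assumes "0 \<le> p" "p \<le> 1" "0 \<le> eps" "eps \<le> 1" "b < n" "blkA 0 = 0" "t \<ge> 0"
  shows "measure_pmf.prob (Wd n p eps) {w. real (simw n blkA blkB \<xi> w b) \<le> \<tau>} \<le>
         exp ((exp (-t) - 1) * (\<Sum>l<n. pif p eps blkA blkB \<xi> b l) + t * \<tau>)"
proof -
  have "measure_pmf.prob (Wd n p eps) {w. real (simw n blkA blkB \<xi> w b) \<le> \<tau>} =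
        measure_pmf.prob (Wd n p eps) {w. - \<tau> \<le> - real (simw n blkA blkB \<xi> w b)}"
    by simp
  also have "\<dots> \<le>
        measure_pmf.expectation (Wd n p eps) (\<lambda>w. exp (t * (- real (simw n blkA blkB \<xi> w b)))) / exp (t * (-\<tau>))"
    by (rule markov_exp[OF finite_Wd assms(7)])
  also have "\<dots> = (\<Prod>l<n. 1 + (exp (-t) - 1) * pif p eps blkA blkB \<xi> b l) / exp (t * (-\<tau>))"
    using assms mgf_simw[OF assms(1-5), where blkA=blkA and t="-t"] by simp
  also have "\<dots> \<le> exp (\<Sum>l<n. (exp (-t) - 1) * pif p eps blkA blkB \<xi> b l) / exp (t * (-\<tau>))"
  proof (intro divide_right_mono prod_le_exp_sum)
    fix l
    have "0 \<le> pif p eps blkA blkB \<xi> b l" "pif p eps blkA blkB \<xi> b l \<le> 1"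
      using pif_bounds[OF assms(1-4)] by auto
    moreover have "0 < exp (-t)" "exp (-t) \<le> 1" using assms(7) by auto
    ultimately have "(1 - exp (-t)) * pif p eps blkA blkB \<xi> b l \<le> 1"
      by (intro mult_le_one) auto
    thus "0 \<le> 1 + (exp (- t) - 1) * pif p eps blkA blkB \<xi> b l" by (simp add: algebra_simps)
  qed simp
  also have "\<dots> = exp ((exp (-t) - 1) * (\<Sum>l<n. pif p eps blkA blkB \<xi> b l) + t * \<tau>)"
    by (simp add: sum_distrib_left flip: exp_diff)
  finally show ?thesis .
qed

lemma tail_XI:
  assumes "0 < i" "i < r" "t \<ge> 0"
  shows "measure_pmf.prob (XId r) {\<xi>. \<tau> \<le> real (card {c \<in> {..<r}. \<xi> (0, c) = \<xi> (i, c)})} \<le>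
         exp ((exp t - 1) * real r / 2 - t * \<tau>)"
proof -
  have "measure_pmf.prob (XId r) {\<xi>. \<tau> \<le> real (card {c \<in> {..<r}. \<xi> (0, c) = \<xi> (i, c)})} \<le>
        measure_pmf.expectation (XId r) (\<lambda>\<xi>. exp (t * real (card {c \<in> {..<r}. \<xi> (0, c) = \<xi> (i, c)}))) / exp (t * \<tau>)"
    by (rule markov_exp[OF finite_XId assms(3)])
  also have "measure_pmf.expectation (XId r) (\<lambda>\<xi>. exp (t * real (card {c \<in> {..<r}. \<xi> (0, c) = \<xi> (i, c)}))) =
        measure_pmf.expectation (XId r) (\<lambda>\<xi>. \<Prod>c<r. exp (t * of_bool (\<xi> (0, c) = \<xi> (i, c))))"
    by (subst exp_card) auto
  also have "\<dots> = (\<Prod>c<r. measure_pmf.expectation (bernoulli_pmf (1/2)) (\<lambda>x. measure_pmf.expectation (bernoulli_pmf (1/2))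
            (\<lambda>y. exp (t * of_bool (x = y)))))"
    unfolding XId_def
    by (rule expectation_prod_Pi_pmf_pairs[where u = "\<lambda>c. (0, c)" and v = "\<lambda>c. (i, c)"
          and G = "\<lambda>c x y. exp (t * of_bool (x = y))"])
       (use assms in \<open>auto simp: inj_on_def\<close>)
  also have "\<dots> = (\<Prod>c<r. 1 + (exp t - 1) / 2)"
    by (intro prod.cong refl) (simp add: integral_bernoulli_pmf field_simps)
  also have "\<dots> \<le> exp (\<Sum>c<r. (exp t - 1) / 2)"
    using assms by (intro prod_le_exp_sum) auto
  finally show ?thesis
    by (simp add: exp_diff divide_right_mono mult.commute)
qed

lemma prob_nonerased:
  assumes "0 \<le> p" "p \<le> 1" "0 \<le> eps" "eps \<le> 1" "T \<subseteq> {..<n}" "j < n"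
  shows "measure_pmf.prob (Wd n p eps) {w. \<forall>a\<in>T. \<not> snd (w (a, j))} = (1 - eps) ^ card T"
proof -
  have "measure_pmf.prob (Wd n p eps) {w. \<forall>a\<in>T. \<not> snd (w (a, j))} =
        measure_pmf.expectation (Wd n p eps) (\<lambda>w. \<Prod>a\<in>T. of_bool (\<not> snd (w (a, j))))"
    by (simp add: prob_as_expectation of_bool_def prod.neutral_const prod_zero_iff finite_subset[OF assms(5)] cong: if_cong)
       (intro Bochner_Integration.integral_cong refl, auto simp: prod_zero_iff finite_subset[OF assms(5)])
  also have "\<dots> = (\<Prod>a\<in>T. measure_pmf.expectation (Qd p eps) (\<lambda>y. of_bool (\<not> snd y)))"
    unfolding Wd_def
    by (rule expectation_prod_Pi_pmf_reindex[where u = "\<lambda>a. (a, j)" and g = "\<lambda>a y. of_bool (\<not> snd y)"])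
       (use assms in \<open>auto simp: inj_on_def\<close>)
  also have "\<dots> = (1 - eps) ^ card T"
    using assms by (simp add: Qd_def expectation_pair_iter finite_set_pmf_finite_type integral_bernoulli_pmf)
  finally show ?thesis .
qed



lemma block_sum:
  fixes h :: "nat \<Rightarrow> real"
  assumes "block_partition n r k blk"
  shows "(\<Sum>l<n. h (blk l)) = real k * (\<Sum>c<r. h c)"
proof -
  have "(\<Sum>l<n. h (blk l)) = (\<Sum>c<r. \<Sum>l\<in>{l \<in> {..<n}. blk l = c}. h (blk l))"
    using assms by (subst sum.group[symmetric, of "{..<n}" "{..<r}" blk]) (auto simp: block_partition_def)
  also have "\<dots> = (\<Sum>c<r. \<Sum>l\<in>{l \<in> {..<n}. blk l = c}. h c)"
    by (intro sum.cong refl) auto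
  also have "\<dots> = (\<Sum>c<r. real k * h c)"
    using assms by (intro sum.cong refl) (simp add: block_partition_def)
  finally show ?thesis by (simp add: sum_distrib_left)
qed

lemma exp_neg_bound:
  fixes x :: real
  assumes "0 \<le> x" "x \<le> 1"
  shows "exp (-x) \<le> 1 - x + x^2"
proof -
  have "1 + x \<le> exp x" using exp_ge_add_one_self[of x] by linarith
  have pos: "0 < 1 + x" using assms by simp
  have "exp (-x) = 1 / exp x" by (simp add: exp_minus field_simps)
  also have "\<dots> \<le> 1 / (1 + x)" using \<open>1 + x \<le> exp x\<close> pos by (intro divide_left_mono) auto
  also have "\<dots> \<le> 1 - x + x^2"
  proof -
    have "1 \<le> (1 + x) * (1 - x + x^2)" using assms by (simp add: algebra_simps power2_eq_square power3_eq_cube)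
    thus ?thesis using pos by (simp add: field_simps)
  qed
  finally show ?thesis .
qed

lemma chernoff_arith_upper:
  fixes N s d S :: real
  assumes "0 \<le> N" "0 < d" "d \<le> s" "s \<le> 1" "0 \<le> S" "S \<le> N * (s - d/4)"
  shows "(exp (d/16) - 1) * S - (d/16) * (N * (s - d/8)) \<le> - (d^2 * N / 256)"
proof -
  define t where "t = d/16"
  have t0: "0 \<le> t" "t \<le> 1" using assms by (auto simp: t_def)
  have e1: "exp t - 1 \<le> t + t^2" using exp_bound[OF t0] by simp
  have e0: "0 \<le> exp t - 1" using t0 by simp
  have "(exp t - 1) * S \<le> (exp t - 1) * (N * (s - d/4))" using e0 assms by (intro mult_left_mono) auto
  also have "\<dots> \<le> (t + t^2) * (N * (s - d/4))" using e1 assms by (intro mult_right_mono) auto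
  finally have 1: "(exp t - 1) * S \<le> (t + t^2) * (N * (s - d/4))" .
  have 2: "t^2 * (N * (s - d/4)) \<le> t^2 * N"
    using assms by (intro mult_left_mono) (auto intro: mult_left_le)
  have "(t + t^2) * (N * (s - d/4)) - t * (N * (s - d/8)) = - t * N * d / 8 + t^2 * (N * (s - d/4))"
    by (simp add: algebra_simps)
  with 1 2 have "(exp t - 1) * S - t * (N * (s - d/8)) \<le> - t * N * d / 8 + t^2 * N" by linarith
  also have "\<dots> = - (d^2 * N / 256)" by (simp add: t_def power2_eq_square field_simps)
  finally show ?thesis by (simp add: t_def)
qed

lemma chernoff_arith_lower:
  fixes N s d S :: real
  assumes "0 \<le> N" "0 < d" "d \<le> s" "s \<le> 1" "N * s \<le> S"
  shows "(exp (- (d/16)) - 1) * S + (d/16) * (N * (s - d/8)) \<le> - (d^2 * N / 256)"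
proof -
  define t where "t = d/16"
  have t0: "0 \<le> t" "t \<le> 1" using assms by (auto simp: t_def)
  have e1: "exp (-t) - 1 \<le> - t + t^2" using exp_neg_bound[OF t0] by simp
  have e0: "exp (-t) - 1 \<le> 0" using t0 by simp
  have "(exp (-t) - 1) * S \<le> (exp (-t) - 1) * (N * s)" using e0 assms by (intro mult_left_mono_neg) auto
  also have "\<dots> \<le> (- t + t^2) * (N * s)" using e1 assms by (intro mult_right_mono) auto
  finally have 1: "(exp (-t) - 1) * S \<le> (- t + t^2) * (N * s)" .
  have 2: "t^2 * (N * s) \<le> t^2 * N"
    using assms by (intro mult_left_mono) (auto intro: mult_left_le)
  have "(- t + t^2) * (N * s) + t * (N * (s - d/8)) = - t * N * d / 8 + t^2 * (N * s)"
    by (simp add: algebra_simps)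
  with 1 2 have "(exp (-t) - 1) * S + t * (N * (s - d/8)) \<le> - t * N * d / 8 + t^2 * N" by linarith
  also have "\<dots> = - (d^2 * N / 256)" by (simp add: t_def power2_eq_square field_simps)
  finally show ?thesis by (simp add: t_def)
qed

lemma xi_arith:
  fixes r :: real assumes "0 \<le> r"
  shows "(exp (1/4) - 1) * r / 2 - (1/4) * (3 * r / 4) \<le> - (r / 32)"
proof -
  have "exp (1/4::real) \<le> 1 + 1/4 + (1/4)^2" by (rule exp_bound) auto
  hence "exp (1/4::real) - 1 \<le> 5/16" by (simp add: power2_eq_square)
  hence "(exp (1/4) - 1) * r \<le> 5/16 * r" using assms by (intro mult_right_mono) auto
  thus ?thesis by simp
qed



definition sP :: "real \<Rightarrow> real" where "sP p = (1-p)^2 + p^2"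
definition tP :: "real \<Rightarrow> real" where "tP p = 2*p*(1-p)"
definition dP :: "real \<Rightarrow> real" where "dP p = sP p - tP p"

lemma sP_tP_facts:
  assumes "0 \<le> p" "p < 1/2"
  shows "0 < dP p" "dP p \<le> sP p" "sP p \<le> 1" "0 \<le> tP p" "dP p \<le> 1"
proof -
  have pp: "0 \<le> p*(1-p)" using assms by simp
  have "sP p = 1 - 2*(p*(1-p))" by (simp add: sP_def power2_eq_square algebra_simps)
  thus s1: "sP p \<le> 1" using pp by linarith
  show t0: "0 \<le> tP p" using assms by (simp add: tP_def)
  have "dP p = (1 - 2*p)^2" by (simp add: dP_def sP_def tP_def power2_eq_square algebra_simps)
  moreover have "1 - 2*p \<noteq> 0" using assms by simp
  ultimately show "0 < dP p" by simp
  show "dP p \<le> sP p" using t0 by (simp add: dP_def)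
  thus "dP p \<le> 1" using s1 by linarith
qed

lemma pif_sum_in:
  assumes "0 \<le> p" "p < 1/2" "0 \<le> eps" "eps \<le> 1" "blkA b = 0"
  shows "real n * (1 - eps)^2 * sP p \<le> (\<Sum>l<n. pif p eps blkA blkB \<xi> b l)"
proof (cases "b = 0")
  case True
  have q: "0 \<le> 1 - eps" "1 - eps \<le> 1" using assms by auto
  have q2: "(1 - eps)^2 \<le> 1 - eps" using q by (simp add: power2_eq_square mult_left_le)
  have "(1 - eps)^2 * sP p \<le> (1 - eps)^2"
    using sP_tP_facts[OF assms(1,2)] by (intro mult_left_le) auto
  hence "(1 - eps)^2 * sP p \<le> 1 - eps" using q2 by linarith
  hence "real n * ((1 - eps)^2 * sP p) \<le> real n * (1 - eps)" by (intro mult_left_mono) auto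
  thus ?thesis by (simp add: pif_def True mult.assoc)
next
  case False
  thus ?thesis using assms by (simp add: pif_def sP_def)
qed

lemma pif_sum_out:
  assumes "0 \<le> p" "p < 1/2" "0 \<le> eps" "eps \<le> 1" "b \<noteq> 0"
    and "block_partition n r k blkB" "r * k = n"
    and "real (card {c \<in> {..<r}. \<xi> (0, c) = \<xi> (blkA b, c)}) \<le> 3 * real r / 4"
  shows "(\<Sum>l<n. pif p eps blkA blkB \<xi> b l) \<le> real n * (1 - eps)^2 * (sP p - dP p / 4)"
    and "0 \<le> (\<Sum>l<n. pif p eps blkA blkB \<xi> b l)"
proof -
  define h where "h c = (if \<xi> (0, c) = \<xi> (blkA b, c) then sP p else tP p)" for c
  have "(\<Sum>l<n. pif p eps blkA blkB \<xi> b l) = (\<Sum>l<n. (1 - eps)^2 * h (blkB l))"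
    unfolding h_def sP_def tP_def pif_def using assms by simp
  also have "\<dots> = (1 - eps)^2 * (\<Sum>l<n. h (blkB l))" by (simp add: sum_distrib_left)
  also have "(\<Sum>l<n. h (blkB l)) = real k * (\<Sum>c<r. h c)" by (rule block_sum[OF assms(6)])
  also have "(\<Sum>c<r. h c) = (\<Sum>c<r. tP p + dP p * of_bool (\<xi> (0, c) = \<xi> (blkA b, c)))"
    by (intro sum.cong refl) (simp add: h_def dP_def)
  also have "\<dots> = real r * tP p + dP p * real (card {c \<in> {..<r}. \<xi> (0, c) = \<xi> (blkA b, c)})"
    using real_card_eq_sum[of "{..<r}" "\<lambda>c. \<xi> (0, c) = \<xi> (blkA b, c)"]
    by (simp add: sum.distrib sum_distrib_left[symmetric])
  finally have eq: "(\<Sum>l<n. pif p eps blkA blkB \<xi> b l) =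
     (1 - eps)^2 * (real k * (real r * tP p + dP p * real (card {c \<in> {..<r}. \<xi> (0, c) = \<xi> (blkA b, c)})))" .
  have f: "0 < dP p" "dP p \<le> sP p" "0 \<le> tP p" using sP_tP_facts[OF assms(1,2)] by auto
  have "real r * tP p + dP p * real (card {c \<in> {..<r}. \<xi> (0, c) = \<xi> (blkA b, c)}) \<le>
        real r * tP p + dP p * (3 * real r / 4)"
    using f assms(8) by (intro add_left_mono mult_left_mono) auto
  also have "\<dots> = real r * (sP p - dP p / 4)" by (simp add: dP_def field_simps)
  finally have "real k * (real r * tP p + dP p * real (card {c \<in> {..<r}. \<xi> (0, c) = \<xi> (blkA b, c)})) \<le>
        real k * (real r * (sP p - dP p / 4))" by (intro mult_left_mono) auto
  also have "\<dots> = (real k * real r) * (sP p - dP p / 4)" by (simp only: mult.assoc)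
  also have "real k * real r = real n" using assms(7) by (metis of_nat_mult mult.commute)
  finally have K: "real k * (real r * tP p + dP p * real (card {c \<in> {..<r}. \<xi> (0, c) = \<xi> (blkA b, c)})) \<le>
        real n * (sP p - dP p / 4)" .
  show "(\<Sum>l<n. pif p eps blkA blkB \<xi> b l) \<le> real n * (1 - eps)^2 * (sP p - dP p / 4)"
    unfolding eq using mult_left_mono[OF K, of "(1 - eps)^2"] by (simp add: mult_ac)
  show "0 \<le> (\<Sum>l<n. pif p eps blkA blkB \<xi> b l)"
    using assms by (intro sum_nonneg pif_bounds) auto
qed

definition tau :: "nat \<Rightarrow> real \<Rightarrow> real \<Rightarrow> real" where
  "tau n p eps = real n * (1 - eps)^2 * (sP p - dP p / 8)"

definition beta :: "nat \<Rightarrow> real \<Rightarrow> real \<Rightarrow> real" where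
  "beta n p eps = exp (- (dP p ^ 2 * (real n * (1 - eps)^2) / 256))"

lemma row_tail_in:
  assumes "0 \<le> p" "p < 1/2" "0 \<le> eps" "eps \<le> 1" "b < n" "blkA b = 0" "blkA 0 = 0"
  shows "measure_pmf.prob (Wd n p eps) {w. real (simw n blkA blkB \<xi> w b) \<le> tau n p eps} \<le> beta n p eps"
proof -
  have f: "0 < dP p" "dP p \<le> sP p" "sP p \<le> 1" using sP_tP_facts[OF assms(1,2)] by auto
  have "measure_pmf.prob (Wd n p eps) {w. real (simw n blkA blkB \<xi> w b) \<le> tau n p eps} \<le>
        exp ((exp (-(dP p/16)) - 1) * (\<Sum>l<n. pif p eps blkA blkB \<xi> b l) + (dP p/16) * tau n p eps)"
    using assms f by (intro tail_lower_W) auto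
  also have "\<dots> \<le> beta n p eps"
    unfolding beta_def exp_le_cancel_iff tau_def
    using chernoff_arith_lower[of "real n * (1 - eps)^2" "dP p" "sP p" "\<Sum>l<n. pif p eps blkA blkB \<xi> b l"]
      f pif_sum_in[OF assms(1-4), where blkA=blkA and b=b and n=n and blkB=blkB and \<xi>=\<xi>] assms(6)
    by (simp add: mult.assoc)
  finally show ?thesis .
qed

lemma row_tail_out:
  assumes "0 \<le> p" "p < 1/2" "0 \<le> eps" "eps \<le> 1" "b < n" "blkA b \<noteq> 0" "blkA 0 = 0"
    and "block_partition n r k blkB" "r * k = n"
    and "real (card {c \<in> {..<r}. \<xi> (0, c) = \<xi> (blkA b, c)}) \<le> 3 * real r / 4"
  shows "measure_pmf.prob (Wd n p eps) {w. tau n p eps \<le> real (simw n blkA blkB \<xi> w b)} \<le> beta n p eps"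
proof -
  have b0: "b \<noteq> 0" using assms(6,7) by metis
  have f: "0 < dP p" "dP p \<le> sP p" "sP p \<le> 1" using sP_tP_facts[OF assms(1,2)] by auto
  have "measure_pmf.prob (Wd n p eps) {w. tau n p eps \<le> real (simw n blkA blkB \<xi> w b)} \<le>
        exp ((exp (dP p/16) - 1) * (\<Sum>l<n. pif p eps blkA blkB \<xi> b l) - (dP p/16) * tau n p eps)"
    using assms f by (intro tail_upper_W) auto
  also have "\<dots> \<le> beta n p eps"
    unfolding beta_def exp_le_cancel_iff tau_def
    using chernoff_arith_upper[of "real n * (1 - eps)^2" "dP p" "sP p" "\<Sum>l<n. pif p eps blkA blkB \<xi> b l"]
      f pif_sum_out[OF assms(1-4) b0 assms(8-9), where blkA=blkA and \<xi>=\<xi>] assms(10)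
    by (simp add: mult.assoc)
  finally show ?thesis .
qed

lemma xi_tail:
  assumes "0 < i" "i < r"
  shows "measure_pmf.prob (XId r) {\<xi>. 3 * real r / 4 \<le> real (card {c \<in> {..<r}. \<xi> (0, c) = \<xi> (i, c)})} \<le>
         exp (- (real r / 32))"
proof -
  have "measure_pmf.prob (XId r) {\<xi>. 3 * real r / 4 \<le> real (card {c \<in> {..<r}. \<xi> (0, c) = \<xi> (i, c)})} \<le>
        exp ((exp (1/4) - 1) * real r / 2 - (1/4) * (3 * real r / 4))"
    using assms by (intro tail_XI) auto
  also have "\<dots> \<le> exp (- (real r / 32))"
    using xi_arith[of "real r"] by simp
  finally show ?thesis .
qed



definition obs2 :: "nat \<Rightarrow> (nat \<Rightarrow> nat) \<Rightarrow> (nat \<Rightarrow> nat) \<Rightarrow> (nat \<times> nat \<Rightarrow> bool) \<times> (nat \<times> nat \<Rightarrow> bool \<times> bool) \<Rightarrow> obsmat" where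
  "obs2 n blkA blkB z = observe n blkA blkB (fst z, \<lambda>x. fst (snd z x), \<lambda>x. snd (snd z x))"

lemma Ypmf_eq: "Ypmf n r blkA blkB p eps = map_pmf (obs2 n blkA blkB) (pair_pmf (XId r) (Wd n p eps))"
proof -
  have "pair_pmf (Pi_pmf ({..<n} \<times> {..<n}) False (\<lambda>_. bernoulli_pmf p)) (Pi_pmf ({..<n} \<times> {..<n}) False (\<lambda>_. bernoulli_pmf eps))
        = map_pmf (\<lambda>w. (\<lambda>x. fst (w x), \<lambda>x. snd (w x))) (Wd n p eps)"
    unfolding Wd_def Qd_def by (rule pair_Pi_pmf) auto
  then show ?thesis
    unfolding Ypmf_def XId_def[symmetric]
    by (simp add: pair_map_pmf2 map_pmf_comp obs2_def[abs_def] apsnd_def map_prod_def case_prod_beta)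
qed

lemma obs2_entry:
  assumes "a < n" "l < n"
  shows "obs2 n blkA blkB (\<xi>, w) (a, l) =
         (if snd (w (a, l)) then None else Some (\<xi> (blkA a, blkB l) \<noteq> fst (w (a, l))))"
  using assms by (simp add: obs2_def observe_def)

lemma sim_obs2:
  assumes "b < n" "blkA 0 = 0"
  shows "sim n (obs2 n blkA blkB (\<xi>, w)) 0 b = simw n blkA blkB \<xi> w b"
proof -
  have n0: "0 < n" using assms by simp
  show ?thesis
    unfolding sim_def simw_def
    by (intro arg_cong[where f = card] Collect_cong)
       (use assms n0 in \<open>auto simp: obs2_entry Zf_def split: if_splits\<close>)
qed

lemma card_block:
  assumes "block_partition n r k blk" "r * k = n" "0 < n"
  shows "card {a \<in> {..<n}. blk a = 0} = k"
proof -
  have "0 < r" using assms by (cases r) auto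
  thus ?thesis using assms by (simp add: block_partition_def)
qed



lemma prob_Un_le: "measure_pmf.prob M (A \<union> B) \<le> measure_pmf.prob M A + measure_pmf.prob M B"
  by (rule measure_Un_le) auto

lemma prob_UN_le:
  assumes "finite I" "\<And>i. i \<in> I \<Longrightarrow> measure_pmf.prob M (F i) \<le> c"
  shows "measure_pmf.prob M (\<Union>i\<in>I. F i) \<le> real (card I) * c"
proof -
  have "measure_pmf.prob M (\<Union>i\<in>I. F i) \<le> (\<Sum>i\<in>I. measure_pmf.prob M (F i))"
    using assms by (intro measure_pmf.finite_measure_subadditive_finite) auto
  also have "\<dots> \<le> (\<Sum>i\<in>I. c)" using assms by (intro sum_mono) auto
  finally show ?thesis by simp
qed

lemma main_bound:
  fixes n r k m :: nat and blkA blkB :: "nat \<Rightarrow> nat" and sel :: "obsmat \<Rightarrow> nat set"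
  assumes p: "0 \<le> p" "p < 1/2" and e: "0 \<le> eps" "eps \<le> 1" and n0: "0 < n" and rk: "r * k = n"
    and bA: "block_partition n r k blkA" and bB: "block_partition n r k blkB" and b0: "blkA 0 = 0"
    and sv: "\<And>Y. step1_valid n k Y (sel Y)"
  shows "1 - (real n * real (k choose Suc m) * (1 - eps) ^ Suc m + real r * exp (- (real r / 32))
             + real n * beta n p eps)
         \<le> measure_pmf.prob (Ypmf n r blkA blkB p eps) {Y. \<forall>j<n. col_count Y (sel Y) j \<le> m}"
proof -
  define \<Omega> where "\<Omega> = pair_pmf (XId r) (Wd n p eps)"
  define A1 where "A1 = {a \<in> {..<n}. blkA a = 0}"
  define \<tau> where "\<tau> = tau n p eps"
  define \<beta> where "\<beta> = beta n p eps"
  define Gx where "Gx \<xi> \<longleftrightarrow> (\<forall>i. 0 < i \<and> i < r \<longrightarrow>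
      real (card {c \<in> {..<r}. \<xi> (0, c) = \<xi> (i, c)}) \<le> 3 * real r / 4)" for \<xi> :: "nat \<times> nat \<Rightarrow> bool"
  define Tset where "Tset = {T. T \<subseteq> A1 \<and> card T = Suc m}"
  define E2 where "E2 = (\<Union>j\<in>{..<n}. \<Union>T\<in>Tset. {z :: (nat \<times> nat \<Rightarrow> bool) \<times> (nat \<times> nat \<Rightarrow> bool \<times> bool).
                          \<forall>a\<in>T. \<not> snd (snd z (a, j))})"
  define Ex where "Ex = (\<Union>i\<in>{0<..<r}. {z :: (nat \<times> nat \<Rightarrow> bool) \<times> (nat \<times> nat \<Rightarrow> bool \<times> bool).
                          3 * real r / 4 \<le> real (card {c \<in> {..<r}. fst z (0, c) = fst z (i, c)})})"
  define Ea where "Ea = (\<Union>a\<in>A1. {z :: (nat \<times> nat \<Rightarrow> bool) \<times> (nat \<times> nat \<Rightarrow> bool \<times> bool).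
                          real (simw n blkA blkB (fst z) (snd z) a) \<le> \<tau>})"
  define Eb where "Eb = (\<Union>b\<in>{..<n} - A1. {z :: (nat \<times> nat \<Rightarrow> bool) \<times> (nat \<times> nat \<Rightarrow> bool \<times> bool).
                          Gx (fst z) \<and> \<tau> \<le> real (simw n blkA blkB (fst z) (snd z) b)})"
  have A1sub: "A1 \<subseteq> {..<n}" by (auto simp: A1_def)
  have cardA1: "card A1 = k" unfolding A1_def by (rule card_block[OF bA rk n0])
  have finA1: "finite A1" using A1sub by (rule finite_subset) auto
  have bdd: "\<And>a. a < n \<Longrightarrow> blkA a < r" using bA by (auto simp: block_partition_def)
  have fin\<Omega>: "finite (set_pmf (XId r))" "finite (set_pmf (Wd n p eps))"
    by (rule finite_XId, rule finite_Wd)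
  have \<beta>0: "0 \<le> \<beta>" by (simp add: \<beta>_def beta_def)

  have det: "obs2 n blkA blkB z \<in> {Y. \<forall>j<n. col_count Y (sel Y) j \<le> m}"
    if nz: "z \<notin> E2 \<union> Ex \<union> Ea \<union> Eb" for z
  proof -
    obtain \<xi> w where z: "z = (\<xi>, w)" by (cases z)
    define Y where "Y = obs2 n blkA blkB (\<xi>, w)"
    define S where "S = sel Y"
    have simeq: "sim n Y 0 b = simw n blkA blkB \<xi> w b" if "b < n" for b
      unfolding Y_def by (rule sim_obs2[where blkA=blkA, OF that b0])
    have nEx: "z \<notin> Ex" and nEa: "z \<notin> Ea" and nEb: "z \<notin> Eb" and nE2: "z \<notin> E2"
      using nz by auto
    have gx: "Gx \<xi>"
      unfolding Gx_def
    proof (intro allI impI)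
      fix i assume i: "0 < i \<and> i < r"
      have "\<not> (3 * real r / 4 \<le> real (card {c \<in> {..<r}. \<xi> (0, c) = \<xi> (i, c)}))"
      proof
        assume "3 * real r / 4 \<le> real (card {c \<in> {..<r}. \<xi> (0, c) = \<xi> (i, c)})"
        hence "z \<in> Ex" unfolding Ex_def z using i by auto
        with nEx show False by simp
      qed
      thus "real (card {c \<in> {..<r}. \<xi> (0, c) = \<xi> (i, c)}) \<le> 3 * real r / 4" by linarith
    qed
    have sa: "\<tau> < real (simw n blkA blkB \<xi> w a)" if a: "a \<in> A1" for a
    proof (rule ccontr)
      assume "\<not> \<tau> < real (simw n blkA blkB \<xi> w a)"
      hence "z \<in> Ea" unfolding Ea_def z using a by (auto simp: not_less)
      with nEa show False by simp
    qed
    have sb: "real (simw n blkA blkB \<xi> w b) < \<tau>" if b: "b < n" "b \<notin> A1" for b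
    proof (rule ccontr)
      assume "\<not> real (simw n blkA blkB \<xi> w b) < \<tau>"
      hence "z \<in> Eb" unfolding Eb_def z using b gx by (auto simp: not_less)
      with nEb show False by simp
    qed
    have sv': "S \<subseteq> {..<n}" "card S = k" "\<And>i j. i \<in> S \<Longrightarrow> j \<in> {..<n} - S \<Longrightarrow> sim n Y 0 j \<le> sim n Y 0 i"
      using sv[of Y] unfolding step1_valid_def S_def by auto
    have SA: "S = A1"
    proof (rule ccontr)
      assume ne: "S \<noteq> A1"
      have "\<not> S \<subseteq> A1"
      proof
        assume "S \<subseteq> A1"
        hence "S = A1" using card_subset_eq[OF finA1] sv'(2) cardA1 by auto
        with ne show False by simp
      qed
      then obtain b where b: "b \<in> S" "b \<notin> A1" by auto
      have "\<not> A1 \<subseteq> S"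
      proof
        assume "A1 \<subseteq> S"
        hence "A1 = S" using card_subset_eq[of S A1] sv'(1,2) cardA1 finite_subset[OF sv'(1)] by auto
        with ne show False by simp
      qed
      then obtain a where a: "a \<in> A1" "a \<notin> S" by auto
      have bn: "b < n" using b sv'(1) by auto
      have an: "a < n" using a A1sub by auto
      have "sim n Y 0 a \<le> sim n Y 0 b" using sv'(3)[of b a] a b an by auto
      hence "simw n blkA blkB \<xi> w a \<le> simw n blkA blkB \<xi> w b" using simeq an bn by simp
      moreover have "\<tau> < real (simw n blkA blkB \<xi> w a)" using sa a by simp
      moreover have "real (simw n blkA blkB \<xi> w b) < \<tau>" using sb bn b by simp
      ultimately show False by linarith
    qed
    have "col_count Y S j \<le> m" if j: "j < n" for j
    proof (rule ccontr)
      assume "\<not> col_count Y S j \<le> m"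
      moreover have "{i \<in> A1. Y (i, j) \<noteq> None} = {a \<in> A1. \<not> snd (w (a, j))}"
        using A1sub j by (auto simp: Y_def obs2_entry)
      ultimately have "Suc m \<le> card {a \<in> A1. \<not> snd (w (a, j))}"
        unfolding col_count_def SA by simp
      then obtain T where T: "T \<subseteq> {a \<in> A1. \<not> snd (w (a, j))}" "card T = Suc m"
        by (rule obtain_subset_with_card_n)
      hence "T \<in> Tset" unfolding Tset_def by auto
      moreover have "\<forall>a\<in>T. \<not> snd (snd z (a, j))" using T unfolding z by auto
      ultimately have "z \<in> E2" unfolding E2_def using j by blast
      with nE2 show False by simp
    qed
    thus ?thesis unfolding z Y_def S_def by simp
  qed

  have pE2: "measure_pmf.prob \<Omega> E2 \<le> real n * (real (k choose Suc m) * (1 - eps) ^ Suc m)"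
  proof -
    have finT: "finite Tset" unfolding Tset_def
      by (rule finite_subset[of _ "Pow A1"]) (use finA1 in auto)
    have cT: "card Tset = k choose Suc m"
      unfolding Tset_def using n_subsets[OF finA1] cardA1 by simp
    have "measure_pmf.prob \<Omega> E2 \<le> real (card {..<n}) * (real (k choose Suc m) * (1 - eps) ^ Suc m)"
      unfolding E2_def
    proof (rule prob_UN_le)
      fix j assume j: "j \<in> {..<n}"
      have "measure_pmf.prob \<Omega> (\<Union>T\<in>Tset. {z. \<forall>a\<in>T. \<not> snd (snd z (a, j))}) \<le>
            real (card Tset) * (1 - eps) ^ Suc m"
      proof (intro prob_UN_le finT)
        fix T assume "T \<in> Tset"
        hence T: "T \<subseteq> {..<n}" "card T = Suc m" using A1sub by (auto simp: Tset_def)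
        show "measure_pmf.prob \<Omega> {z. \<forall>a\<in>T. \<not> snd (snd z (a, j))} \<le> (1 - eps) ^ Suc m"
          unfolding \<Omega>_def
          by (rule prob_pair_le[OF fin\<Omega>]) (use prob_nonerased[OF p(1) _ e T(1)] p j T in auto)
      qed
      thus "measure_pmf.prob \<Omega> (\<Union>T\<in>Tset. {z. \<forall>a\<in>T. \<not> snd (snd z (a, j))}) \<le>
            real (k choose Suc m) * (1 - eps) ^ Suc m" by (simp add: cT)
    qed simp
    thus ?thesis by simp
  qed
  have pEx: "measure_pmf.prob \<Omega> Ex \<le> real r * exp (- (real r / 32))"
  proof -
    have "measure_pmf.prob \<Omega> Ex \<le> real (card {0<..<r}) * exp (- (real r / 32))"
      unfolding Ex_def
    proof (intro prob_UN_le)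
      fix i assume i: "i \<in> {0<..<r}"
      have "measure_pmf.prob \<Omega> {z. 3 * real r / 4 \<le> real (card {c \<in> {..<r}. fst z (0, c) = fst z (i, c)})} =
            measure_pmf.prob (XId r) {\<xi>. 3 * real r / 4 \<le> real (card {c \<in> {..<r}. \<xi> (0, c) = \<xi> (i, c)})}"
        unfolding \<Omega>_def by (rule prob_pair_fst)
      also have "\<dots> \<le> exp (- (real r / 32))" using i by (intro xi_tail) auto
      finally show "measure_pmf.prob \<Omega> {z. 3 * real r / 4 \<le> real (card {c \<in> {..<r}. fst z (0, c) = fst z (i, c)})}
                    \<le> exp (- (real r / 32))" .
    qed simp
    also have "\<dots> \<le> real r * exp (- (real r / 32))"
      by (intro mult_right_mono) auto
    finally show ?thesis .
  qed
  have pEa: "measure_pmf.prob \<Omega> Ea \<le> real (card A1) * \<beta>"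
    unfolding Ea_def
  proof (intro prob_UN_le finA1)
    fix a assume a: "a \<in> A1"
    show "measure_pmf.prob \<Omega> {z. real (simw n blkA blkB (fst z) (snd z) a) \<le> \<tau>} \<le> \<beta>"
      unfolding \<Omega>_def
      by (rule prob_pair_le[OF fin\<Omega>])
         (use a A1sub row_tail_in[where blkA=blkA, OF p e _ _ b0] in \<open>auto simp: \<tau>_def \<beta>_def A1_def\<close>)
  qed
  have pEb: "measure_pmf.prob \<Omega> Eb \<le> real (card ({..<n} - A1)) * \<beta>"
    unfolding Eb_def
  proof (intro prob_UN_le)
    fix b assume b: "b \<in> {..<n} - A1"
    have bn: "b < n" and bA1: "blkA b \<noteq> 0" using b by (auto simp: A1_def)
    show "measure_pmf.prob \<Omega> {z. Gx (fst z) \<and> \<tau> \<le> real (simw n blkA blkB (fst z) (snd z) b)} \<le> \<beta>"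
      unfolding \<Omega>_def
    proof (rule prob_pair_le[OF fin\<Omega>])
      fix \<xi> assume "\<xi> \<in> set_pmf (XId r)"
      show "measure_pmf.prob (Wd n p eps) {w. (\<xi>, w) \<in> {z. Gx (fst z) \<and> \<tau> \<le> real (simw n blkA blkB (fst z) (snd z) b)}} \<le> \<beta>"
      proof (cases "Gx \<xi>")
        case True
        have "real (card {c \<in> {..<r}. \<xi> (0, c) = \<xi> (blkA b, c)}) \<le> 3 * real r / 4"
          using True bA1 bdd[OF bn] unfolding Gx_def by auto
        hence "measure_pmf.prob (Wd n p eps) {w. \<tau> \<le> real (simw n blkA blkB \<xi> w b)} \<le> \<beta>"
          unfolding \<tau>_def \<beta>_def by (rule row_tail_out[OF p e bn bA1 b0 bB rk])
        thus ?thesis using True by simp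
      next
        case False
        thus ?thesis using \<beta>0 by simp
      qed
    qed
  qed simp
  have cardsum: "card A1 + card ({..<n} - A1) = n"
  proof -
    have "card A1 \<le> n" using card_mono[OF _ A1sub] by simp
    thus ?thesis using A1sub finA1 by (simp add: card_Diff_subset)
  qed
  have "measure_pmf.prob \<Omega> (E2 \<union> Ex \<union> Ea \<union> Eb) \<le>
        measure_pmf.prob \<Omega> E2 + measure_pmf.prob \<Omega> Ex + measure_pmf.prob \<Omega> Ea + measure_pmf.prob \<Omega> Eb"
    using prob_Un_le[of \<Omega> "E2 \<union> Ex \<union> Ea" Eb] prob_Un_le[of \<Omega> "E2 \<union> Ex" Ea] prob_Un_le[of \<Omega> E2 Ex]
    by linarith
  also have "\<dots> \<le> real n * (real (k choose Suc m) * (1 - eps) ^ Suc m) + real r * exp (- (real r / 32))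
                  + (real (card A1) * \<beta> + real (card ({..<n} - A1)) * \<beta>)"
    using pE2 pEx pEa pEb by linarith
  also have "real (card A1) * \<beta> + real (card ({..<n} - A1)) * \<beta> = real n * \<beta>"
    using cardsum by (simp flip: distrib_right of_nat_add)
  finally have bad: "measure_pmf.prob \<Omega> (E2 \<union> Ex \<union> Ea \<union> Eb) \<le>
      real n * real (k choose Suc m) * (1 - eps) ^ Suc m + real r * exp (- (real r / 32)) + real n * beta n p eps"
    by (simp add: \<beta>_def mult.assoc)
  have c1: "measure_pmf.prob \<Omega> (UNIV - (E2 \<union> Ex \<union> Ea \<union> Eb)) = 1 - measure_pmf.prob \<Omega> (E2 \<union> Ex \<union> Ea \<union> Eb)"
    using measure_pmf.prob_compl[of "E2 \<union> Ex \<union> Ea \<union> Eb" \<Omega>] by simp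
  have c2: "measure_pmf.prob \<Omega> (UNIV - (E2 \<union> Ex \<union> Ea \<union> Eb)) \<le>
      measure_pmf.prob \<Omega> (obs2 n blkA blkB -` {Y. \<forall>j<n. col_count Y (sel Y) j \<le> m})"
    using det by (intro measure_pmf.finite_measure_mono) auto
  have c3: "measure_pmf.prob \<Omega> (obs2 n blkA blkB -` {Y. \<forall>j<n. col_count Y (sel Y) j \<le> m}) =
      measure_pmf.prob (Ypmf n r blkA blkB p eps) {Y. \<forall>j<n. col_count Y (sel Y) j \<le> m}"
    by (simp add: Ypmf_eq measure_map_pmf \<Omega>_def)
  show ?thesis using bad c1 c2 c3 by linarith
qed



lemma T1_bound:
  fixes n k M :: nat and \<alpha> \<gamma> c :: real
  assumes "0 < n" "real k \<le> real n powr (\<alpha> - \<gamma>)" "0 < c"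
  shows "real n * real (k choose M) * (c / real n powr \<alpha>) ^ M \<le> c ^ M * real n powr (1 - \<gamma> * M)"
proof -
  have ch: "real (k choose M) \<le> real k ^ M"
  proof (cases "M \<le> k")
    case True thus ?thesis using binomial_le_pow[OF True] by (metis of_nat_le_iff of_nat_power)
  next
    case False thus ?thesis by (simp add: binomial_eq_0)
  qed
  have pk: "real k ^ M \<le> (real n powr (\<alpha> - \<gamma>)) ^ M" using assms(2) by (intro power_mono) auto
  have q0: "0 \<le> (c / real n powr \<alpha>) ^ M" using assms by simp
  have ch2: "real (k choose M) \<le> (real n powr (\<alpha> - \<gamma>)) ^ M" by (rule order_trans[OF ch pk])
  have "real n * real (k choose M) * (c / real n powr \<alpha>) ^ M \<le>
        real n * (real n powr (\<alpha> - \<gamma>)) ^ M * (c / real n powr \<alpha>) ^ M"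
    using ch2 q0 by (intro mult_right_mono mult_left_mono) auto
  also have "\<dots> = c ^ M * (real n powr 1 * real n powr (real M * (\<alpha> - \<gamma>)) / real n powr (real M * \<alpha>))"
    using assms(1) by (simp add: powr_power power_divide field_simps)
  also have "real n powr 1 * real n powr (real M * (\<alpha> - \<gamma>)) / real n powr (real M * \<alpha>) =
             real n powr (1 + real M * (\<alpha> - \<gamma>) - real M * \<alpha>)"
    by (simp add: powr_add powr_diff)
  also have "1 + real M * (\<alpha> - \<gamma>) - real M * \<alpha> = 1 - \<gamma> * M" by (simp add: algebra_simps)
  finally show ?thesis .
qed

lemma T3_eq:
  fixes n :: nat and \<alpha> c :: real
  assumes "0 < n"
  shows "real n * beta n p (1 - c / real n powr \<alpha>) =
         real n * exp (- ((dP p ^ 2 * c ^ 2 / 256) * real n powr (1 - 2 * \<alpha>)))"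
proof -
  have sq: "(real n powr \<alpha>)^2 = real n powr (2 * \<alpha>)" using powr_power[of "real n" \<alpha> 2] assms by simp
  have "real n * (c / real n powr \<alpha>)^2 = c^2 * (real n powr 1 / real n powr (2 * \<alpha>))"
    using assms by (simp add: power_divide sq field_simps)
  also have "\<dots> = c^2 * real n powr (1 - 2 * \<alpha>)" by (simp add: powr_diff)
  finally have "real n * (c / real n powr \<alpha>)^2 = c^2 * real n powr (1 - 2 * \<alpha>)" .
  thus ?thesis unfolding beta_def by (simp add: mult_ac)
qed

theorem lemma5:
  fixes \<alpha> c p \<gamma> :: real
    and r k :: "nat \<Rightarrow> nat"
    and blkA blkB :: "nat \<Rightarrow> nat \<Rightarrow> nat"
    and sel :: "nat \<Rightarrow> obsmat \<Rightarrow> nat set"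
  assumes "0 \<le> \<alpha>" "\<alpha> < 1/2" "c > 0" "0 \<le> p" "p < 1/2" "\<gamma> > 0"
    and "\<And>n. r n * k n = n"
    and "filterlim r at_top sequentially"
    and "\<And>n. real (k n) \<le> real n powr (\<alpha> - \<gamma>)"
    and "\<And>n. block_partition n (r n) (k n) (blkA n)"
    and "\<And>n. block_partition n (r n) (k n) (blkB n)"
    and "\<And>n. 0 < n \<Longrightarrow> blkA n 0 = 0"
    and "\<And>n Y. step1_valid n (k n) Y (sel n Y)"
  shows "(\<lambda>n. measure_pmf.prob
            (Ypmf n (r n) (blkA n) (blkB n) p (1 - c / real n powr \<alpha>))
            {Y. \<forall>j<n. col_count Y (sel n Y) j \<le> nat \<lfloor>1 / \<gamma>\<rfloor>})
         \<longlonglongrightarrow> 1"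
proof -
  note a = assms
  define m where "m = nat \<lfloor>1 / \<gamma>\<rfloor>"
  define P where "P n = measure_pmf.prob (Ypmf n (r n) (blkA n) (blkB n) p (1 - c / real n powr \<alpha>))
            {Y. \<forall>j<n. col_count Y (sel n Y) j \<le> m}" for n
  have Ple: "P n \<le> 1" for n unfolding P_def by simp
  show ?thesis
  proof (cases "\<gamma> < \<alpha>")
    case False
    have "\<gamma> = \<alpha>"
    proof (rule ccontr)
      assume "\<gamma> \<noteq> \<alpha>"
      hence "\<alpha> - \<gamma> < 0" using False by simp
      hence "real (k 2) < 1" using a(9)[of 2] powr_less_one[of "real (2::nat)" "\<alpha> - \<gamma>"] by simp
      hence "k 2 = 0" by simp
      thus False using a(7)[of 2] by simp
    qed
    hence "1 \<le> 1 / \<gamma>" using a(2) a(6) by (simp add: le_divide_eq)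
    hence "of_int (1::int) \<le> 1 / \<gamma>" by simp
    hence "(1::int) \<le> \<lfloor>1 / \<gamma>\<rfloor>" by (simp only: le_floor_iff)
    hence m1: "1 \<le> m" using nat_mono[of 1 "\<lfloor>1 / \<gamma>\<rfloor>"] unfolding m_def by simp
    have "P n = 1" if n: "0 < n" for n
    proof -
      have "real (k n) \<le> 1" using a(9)[of n] \<open>\<gamma> = \<alpha>\<close> n by simp
      hence k1: "k n \<le> 1" by simp
      have "{Y. \<forall>j<n. col_count Y (sel n Y) j \<le> m} = UNIV"
      proof (intro set_eqI iffI, simp, clarify)
        fix Y j
        have S: "sel n Y \<subseteq> {..<n}" "card (sel n Y) = k n" using a(13)[of n Y] by (auto simp: step1_valid_def)
        have "col_count Y (sel n Y) j \<le> card (sel n Y)"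
          unfolding col_count_def using S by (intro card_mono) (auto intro: finite_subset)
        thus "col_count Y (sel n Y) j \<le> m" using S k1 m1 by simp
      qed
      thus ?thesis unfolding P_def by simp
    qed
    hence "eventually (\<lambda>n. P n = 1) sequentially"
      by (intro eventually_sequentiallyI[of 1]) auto
    hence "P \<longlonglongrightarrow> 1" by (rule tendsto_eventually)
    thus ?thesis unfolding P_def m_def .
  next
    case True
    have al: "0 < \<alpha>" using True a(6) by simp
    define M where "M = Suc m"
    have gM: "1 < \<gamma> * real M"
    proof -
      have "1 / \<gamma> < real_of_int (\<lfloor>1/\<gamma>\<rfloor>) + 1" by linarith
      moreover have "real_of_int \<lfloor>1/\<gamma>\<rfloor> = real m" using a(6) unfolding m_def by simp
      ultimately have "1 / \<gamma> < real M" by (simp add: M_def)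
      thus ?thesis using a(6) by (simp add: field_simps)
    qed
    define bad where "bad n = real n * real (k n choose M) * (1 - (1 - c / real n powr \<alpha>)) ^ M
          + real (r n) * exp (- (real (r n) / 32)) + real n * beta n p (1 - c / real n powr \<alpha>)" for n
    have ev_pow: "eventually (\<lambda>n. c \<le> real n powr \<alpha>) sequentially"
    proof -
      have "filterlim (\<lambda>n. real n powr \<alpha>) at_top sequentially"
      proof -
        have "filterlim (\<lambda>x::real. x powr \<alpha>) at_top at_top" using al by real_asymp
        from filterlim_compose[OF this filterlim_real_sequentially] show ?thesis by simp
      qed
      thus ?thesis by (simp add: filterlim_at_top)
    qed
    have ev_main: "eventually (\<lambda>n. 1 - bad n \<le> P n) sequentially"
      using ev_pow eventually_gt_at_top[of 0]
    proof eventually_elim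
      case (elim n)
      have q: "0 \<le> c / real n powr \<alpha>" "c / real n powr \<alpha> \<le> 1" using elim a(3) by auto
      show ?case
        unfolding P_def bad_def M_def
        using main_bound[of p "1 - c / real n powr \<alpha>" n "r n" "k n" "blkA n" "blkB n" "sel n" m]
          a(4,5,7,10,11) a(12)[OF elim(2)] a(13) q elim(2) by simp
    qed
    have bad0: "bad \<longlonglongrightarrow> 0"
    proof -
      define C where "C = dP p ^ 2 * c ^ 2 / 256"
      have C0: "0 < C" using sP_tP_facts(1)[OF a(4,5)] a(3) by (simp add: C_def)
      have L1: "(\<lambda>n. c ^ M * real n powr (1 - \<gamma> * M)) \<longlonglongrightarrow> 0"
        using gM by (intro tendsto_mult_right_zero tendsto_neg_powr filterlim_real_sequentially) auto
      have L2: "(\<lambda>n. real (r n) * exp (- (real (r n) / 32))) \<longlonglongrightarrow> 0"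
      proof -
        have lim: "((\<lambda>x::real. x * exp (- (x / 32))) \<longlongrightarrow> 0) at_top" by real_asymp
        have "filterlim (\<lambda>n. real (r n)) at_top sequentially"
          by (rule filterlim_compose[OF filterlim_real_sequentially a(8)])
        from filterlim_compose[OF lim this] show ?thesis by simp
      qed
      have L3: "(\<lambda>n. real n * exp (- (C * real n powr (1 - 2 * \<alpha>)))) \<longlonglongrightarrow> 0"
      proof -
        have b0: "0 < 1 - 2 * \<alpha>" using a(2) by simp
        have lim: "((\<lambda>x::real. x * exp (- (C * x powr (1 - 2 * \<alpha>)))) \<longlongrightarrow> 0) at_top"
          using C0 b0 by real_asymp
        from filterlim_compose[OF lim filterlim_real_sequentially] show ?thesis by simp
      qed
      have up: "eventually (\<lambda>n. bad n \<le> c ^ M * real n powr (1 - \<gamma> * M) + real (r n) * exp (- (real (r n) / 32))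
                  + real n * exp (- (C * real n powr (1 - 2 * \<alpha>)))) sequentially"
        using eventually_gt_at_top[of 0]
      proof eventually_elim
        case (elim n)
        have "real n * real (k n choose M) * (1 - (1 - c / real n powr \<alpha>)) ^ M \<le> c ^ M * real n powr (1 - \<gamma> * M)"
          using T1_bound[OF elim a(9)[of n] a(3), of M] by simp
        moreover have "real n * beta n p (1 - c / real n powr \<alpha>) = real n * exp (- (C * real n powr (1 - 2 * \<alpha>)))"
          using T3_eq[OF elim, of p c \<alpha>] by (simp add: C_def)
        ultimately show ?case unfolding bad_def by linarith
      qed
      have lo: "eventually (\<lambda>n. 0 \<le> bad n) sequentially"
        using eventually_gt_at_top[of 0]
      proof eventually_elim
        case (elim n)
        have "0 \<le> c / real n powr \<alpha>" using a(3) by simp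
        thus ?case unfolding bad_def beta_def by (intro add_nonneg_nonneg mult_nonneg_nonneg) auto
      qed
      have "(\<lambda>n. c ^ M * real n powr (1 - \<gamma> * M) + real (r n) * exp (- (real (r n) / 32))
                  + real n * exp (- (C * real n powr (1 - 2 * \<alpha>)))) \<longlonglongrightarrow> 0 + 0 + 0"
        by (intro tendsto_add L1 L2 L3)
      thus ?thesis using tendsto_sandwich[OF lo up] by simp
    qed
    have "(\<lambda>n. 1 - bad n) \<longlonglongrightarrow> 1 - 0" by (intro tendsto_diff tendsto_const bad0)
    hence "P \<longlonglongrightarrow> 1"
      using tendsto_sandwich[OF ev_main always_eventually[of "\<lambda>n. P n \<le> 1"]] Ple by simp
    thus ?thesis unfolding P_def m_def .
  qed
qed

end
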